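(* If $f:[-1,1]\to\mathbb{R}$ is $3$-convex, then \[ f\Bigl(-\tfrac{\sqrt3}{3}\Bigr)+f\Bigl(\tfrac{\sqrt3}{3}\Bigr)\;\le\;\tfrac{2}{3}\Bigl(f\bigl(-\tfrac{\sqrt2}{2}\bigr)+f(0)+f\bigl(\tfrac{\sqrt2}{2}\bigr)\Bigr)\;\le\;\int_{-1}^1 f(x)\,dx . \]
   Context: Divided differences are defined recursively by $[x_1;f]:=f(x_1)$ and $[x_1,\dots,x_{m+1};f]:=\frac{[x_2,\dots,x_{m+1};f]-[x_1,\dots,x_m;f]}{x_{m+1}-x_1}$ for pairwise distinct points. For $m\in\mathbb{N}$, a function $f$ on an interval $I$ is called $m$-convex if $[x_1,\dots,x_{m+2};f]\ge 0$ for all pairwise distinct $x_1,\dots,x_{m+2}\in I$. Integrals are Riemann integrals (an $m$-convex function on a compact interval is Riemann integrable). *)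

theory Defs
  imports "HOL-Analysis.Analysis"
begin

fun divdiff :: "real list \<Rightarrow> (real \<Rightarrow> real) \<Rightarrow> real" where
  "divdiff [] f = 0"
| "divdiff [x] f = f x"
| "divdiff (x # y # ys) f =
     (divdiff (y # ys) f - divdiff (butlast (x # y # ys)) f) / (last (y # ys) - x)"

definition m_convex_on :: "nat \<Rightarrow> real set \<Rightarrow> (real \<Rightarrow> real) \<Rightarrow> bool" where
  "m_convex_on m I f \<longleftrightarrow>
     (\<forall>xs. length xs = m + 2 \<and> distinct xs \<and> set xs \<subseteq> I \<longrightarrow> divdiff xs f \<ge> 0)"

end

theory Submission
  imports Defs
begin

lemma dd3_lag:
  assumes "distinct [p,q,r]"
  shows "divdiff [p,q,r] f = f p/((p-q)*(p-r)) + f q/((q-p)*(q-r)) + f r/((r-p)*(r-q))"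
proof -
  have h: "p - q \<noteq> 0" "p - r \<noteq> 0" "q - r \<noteq> 0"
    "q - p \<noteq> 0" "r - p \<noteq> 0" "r - q \<noteq> 0"
    using assms by auto
  show ?thesis using h apply (simp add: divide_simps h mult_eq_0_iff) apply (simp add: algebra_simps) done
qed
lemma dd4_lag:
  assumes "distinct [p,q,r,x]"
  shows "divdiff [p,q,r,x] f = f p/((p-q)*(p-r)*(p-x)) + f q/((q-p)*(q-r)*(q-x))
     + f r/((r-p)*(r-q)*(r-x)) + f x/((x-p)*(x-q)*(x-r))"
proof -
  have h: "x - p \<noteq> 0" "x - q \<noteq> 0" "x - r \<noteq> 0" "p - q \<noteq> 0" "p - r \<noteq> 0" "q - r \<noteq> 0"
    "q - p \<noteq> 0" "r - p \<noteq> 0" "r - q \<noteq> 0" "p - x \<noteq> 0" "q - x \<noteq> 0" "r - x \<noteq> 0"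
    using assms by auto
  have d1: "distinct [q,r,x]" "distinct [p,q,r]" using assms by auto
  have e: "divdiff [p,q,r,x] f = (divdiff [q,r,x] f - divdiff [p,q,r] f) / (x - p)" by simp
  have c1: "(1/((q-r)*(q-x)) - 1/((q-p)*(q-r)))/(x-p) = 1/((q-p)*(q-r)*(q-x))"
    using h by (simp add: divide_simps h mult_eq_0_iff; simp add: algebra_simps)
  have c2: "(1/((r-q)*(r-x)) - 1/((r-p)*(r-q)))/(x-p) = 1/((r-p)*(r-q)*(r-x))"
    using h by (simp add: divide_simps h mult_eq_0_iff; simp add: algebra_simps)
  have c3: "(1/((x-q)*(x-r)))/(x-p) = 1/((x-p)*(x-q)*(x-r))"
    using h by (simp add: divide_simps h mult_eq_0_iff; simp add: algebra_simps)
  have c4: "(- 1/((p-q)*(p-r)))/(x-p) = 1/((p-q)*(p-r)*(p-x))"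
    using h by (simp add: divide_simps h mult_eq_0_iff; simp add: algebra_simps)
  have "divdiff [p,q,r,x] f = f p * ((- 1/((p-q)*(p-r)))/(x-p)) + f q * ((1/((q-r)*(q-x)) - 1/((q-p)*(q-r)))/(x-p))
     + f r * ((1/((r-q)*(r-x)) - 1/((r-p)*(r-q)))/(x-p)) + f x * ((1/((x-q)*(x-r)))/(x-p))"
    unfolding e dd3_lag[OF d1(1)] dd3_lag[OF d1(2)]
    by (simp only: divide_inverse) algebra
  then show ?thesis unfolding c1 c2 c3 c4 by simp
qed
lemma dd4_sym:
  assumes "distinct [x,p,q,r]"
  shows "divdiff [x,p,q,r] f = divdiff [p,q,r,x] f"
  proof -
  have d: "distinct [p,q,r,x]" using assms by auto
  show ?thesis unfolding dd4_lag[OF assms] dd4_lag[OF d] by (simp add: mult_ac add_ac)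
qed
lemma dd5:
  assumes "distinct [x,p,q,r,y]"
  shows "divdiff [x,p,q,r,y] f = (divdiff [p,q,r,y] f - divdiff [p,q,r,x] f) / (y - x)"
  using dd4_sym[of x p q r f] assms by simp
lemma newton:
  assumes "distinct [p,q,r,x]"
  shows "f x = f p + (x-p)*divdiff [p,q] f + (x-p)*(x-q)*divdiff [p,q,r] f
     + (x-p)*(x-q)*(x-r)*divdiff [p,q,r,x] f"
proof -
  have d: "distinct [p,q,r]" using assms by auto
  have h: "x - p \<noteq> 0" "x - q \<noteq> 0" "x - r \<noteq> 0" "p - q \<noteq> 0" "p - r \<noteq> 0" "q - r \<noteq> 0"
    using assms by auto
  have i: "(x-p)*inverse(x-p) = 1" "(x-q)*inverse(x-q) = 1" "(x-r)*inverse(x-r) = 1"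
     "(p-q)*inverse(p-q) = 1" "(p-r)*inverse(p-r) = 1" "(q-r)*inverse(q-r) = 1"
    using h by auto
  have n: "inverse (p-x) = - inverse(x-p)" "inverse (q-x) = - inverse(x-q)" "inverse (r-x) = - inverse(x-r)"
     "inverse (q-p) = - inverse(p-q)" "inverse (r-p) = - inverse(p-r)" "inverse (r-q) = - inverse(q-r)"
    by (simp_all add: inverse_minus_eq[symmetric])
  have dd2: "divdiff [p,q] f = (f q - f p)/(q-p)" by simp
  show ?thesis
    unfolding dd4_lag[OF assms] dd3_lag[OF d] dd2
    apply (simp only: divide_inverse inverse_mult_distrib n)
    using i by algebra
qed
lemma int_prod:
 fixes g w :: "real \<Rightarrow> real"
 assumes m: "mono_on {c..d} g" and cw: "continuous_on {c..d} w" and b: "\<forall>x\<in>{c..d}. \<bar>w x\<bar> \<le> 1"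
 shows "(\<lambda>x. w x * g x) integrable_on {c..d}"
proof -
  have ig: "integrable (lebesgue_on {c..d}) g" by (rule integrable_mono_on[OF m])
  have gm: "g \<in> borel_measurable (lebesgue_on {c..d})"
    using ig by (rule borel_measurable_integrable)
  have wm: "w \<in> borel_measurable (lebesgue_on {c..d})"
    using cw by (simp add: continuous_imp_measurable_on_sets_lebesgue)
  have "integrable (lebesgue_on {c..d}) (\<lambda>x. w x * g x)"
  proof (rule Bochner_Integration.integrable_bound[OF ig])
    show "(\<lambda>x. w x * g x) \<in> borel_measurable (lebesgue_on {c..d})"
      using wm gm by measurable
    show "AE x in lebesgue_on {c..d}. norm (w x * g x) \<le> norm (g x)"
      by (rule AE_I2) (use b in \<open>auto simp: abs_mult intro!: mult_left_le_one_le\<close>)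
  qed
  then show ?thesis by (simp add: integrable_on_lebesgue_on)
qed

lemma lin_aux:
  fixes T K s x y z :: real
  assumes "T \<le> 0" "K = 2/3*(x+y-2*z)" "s = 2*z + K + T"
  shows "s \<le> 2/3*(y+z+x)"
  using assms by (simp add: field_simps)

theorem proposition3:
  fixes f :: "real \<Rightarrow> real"
  assumes "m_convex_on 3 {-1..1} f"
  shows "f (- sqrt 3 / 3) + f (sqrt 3 / 3)
           \<le> 2 / 3 * (f (- sqrt 2 / 2) + f 0 + f (sqrt 2 / 2)) \<and>
         2 / 3 * (f (- sqrt 2 / 2) + f 0 + f (sqrt 2 / 2)) \<le> integral {-1..1} f"
proof -
  define a where "a = sqrt 2 / 2"
  define b where "b = sqrt 3 / 3"
  have a0: "a > 0" and b0: "b > 0" by (simp_all add: a_def b_def)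
  have a2: "a^2 = 1/2" by (simp add: a_def power_divide)
  have b2: "b^2 = 1/3" by (simp add: b_def power_divide)
  have ba: "b < a"
    by (rule power_less_imp_less_base[of _ 2]) (use a2 b2 a0 in auto)
  have a1: "a < 1"
    by (rule power_less_imp_less_base[of _ 2]) (use a2 a0 in auto)
  define S where "S = {-1..1} - {-a,0,a::real}"
  define D where "D x = divdiff [-a,0,a,x] f" for x
  define B where "B = divdiff [-a,0] f"
  define C where "C = divdiff [-a,0,a] f"
  have aB: "a * B = f 0 - f (-a)" using a0 by (simp add: B_def field_simps)
  have "C * (2*a^2) = f a + f (-a) - 2 * f 0"
    using a0 by (simp add: C_def field_simps power2_eq_square)
  then have Cv: "C = f a + f (-a) - 2 * f 0" using a2 by simp
  have mono: "D x \<le> D y" if xy: "x \<in> S" "y \<in> S" "x \<le> y" for x y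
  proof (cases "x = y")
    case False
    then have lt: "x < y" using xy by simp
    have "divdiff [x,-a,0,a,y] f \<ge> 0"
      using assms xy lt a0 a1 unfolding m_convex_on_def S_def
      by (auto elim!: allE[of _ "[x,-a,0,a,y]"])
    moreover have "divdiff [x,-a,0,a,y] f = (D y - D x) / (y - x)"
      unfolding D_def using xy lt a0 by (intro dd5) (auto simp: S_def)
    ultimately show ?thesis using lt by (simp add: zero_le_divide_iff)
  qed simp
  have newt: "f x = f (-a) + (x+a)*B + (x+a)*x*C + (x^3 - x/2) * D x" if "x \<in> S" for x
  proof -
    have "f x = f (-a) + (x - -a)*B + (x - -a)*(x-0)*C + (x - -a)*(x-0)*(x-a)*D x"
      unfolding B_def C_def D_def using that a0 by (intro newton) (auto simp: S_def)
    moreover have "(x+a)*x*(x-a) = x^3 - a^2*x" by (simp add: algebra_simps power2_eq_square power3_eq_cube)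
    ultimately show ?thesis using a2 by simp
  qed
  have G: "f x + f (-x) = 2*f 0 + 2*x^2*C + (x^3 - x/2)*(D x - D (-x))"
    if "x \<in> S" "-x \<in> S" for x
  proof -
    have "f x + f (-x) = 2 * f (-a) + 2*(a*B) + 2*x^2*C + (x^3 - x/2)*(D x - D (-x))"
      using newt[OF that(1)] newt[OF that(2)]
      by (simp add: algebra_simps power2_eq_square power3_eq_cube)
    then show ?thesis using aB by simp
  qed
  have bS: "b \<in> S" "-b \<in> S" using b0 ba a1 by (auto simp: S_def)
  have ineq1: "f (-b) + f b \<le> 2/3 * (f (-a) + f 0 + f a)"
  proof -
    have "D (-b) \<le> D b" using mono bS b0 by simp
    moreover have "b^3 - b/2 = - b/6" using b2 by (simp add: power3_eq_cube power2_eq_square algebra_simps)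
    ultimately have "(b^3 - b/2)*(D b - D (-b)) \<le> 0" using b0
      by (simp add: mult_nonneg_nonneg)
    moreover have "2*b^2*C = 2/3*(f a + f (-a) - 2 * f 0)" unfolding b2 Cv by simp
    ultimately have "f b + f (-b) \<le> 2/3 * (f (-a) + f 0 + f a)" by (rule lin_aux[OF _ _ G[OF bS]])
    then show ?thesis by (simp add: add.commute)
  qed
  define E where "E x = D x - D (-x)" for x
  have Emono: "E x \<le> E y" if "0 < x" "x \<le> y" "y \<le> 1" "x \<noteq> a" "y \<noteq> a" for x y
  proof -
    have "x \<in> S" "y \<in> S" "-x \<in> S" "-y \<in> S" using that a0 by (auto simp: S_def)
    then show ?thesis unfolding E_def using mono[of x y] mono[of "-y" "-x"] that by simp
  qed
  define L where "L = Sup (E ` {0<..<a})"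
  have ne: "E ` {0<..<a} \<noteq> {}" using a0 by auto
  have bdd: "bdd_above (E ` {0<..<a})"
    by (rule bdd_aboveI[of _ "E 1"]) (use Emono a1 in auto)
  have pw: "2*f 0 + 2*x^2*C + (x^3 - x/2)*L \<le> f x + f (-x)" if x: "x \<in> {0..1}" for x
  proof -
    consider "x = 0" | "x = a" | "0 < x" "x < a" | "a < x" "x \<le> 1" using x by force
    then show ?thesis
    proof cases
      case 1 then show ?thesis by simp
    next
      case 2
      have w0: "a^3 - a/2 = 0" using a2 by (simp add: power3_eq_cube power2_eq_square algebra_simps)
      show ?thesis using 2 by (simp add: a2 Cv w0)
    next
      case 3
      have xS: "x \<in> S" "-x \<in> S" using 3 a1 by (auto simp: S_def)
      have "E x \<le> L" unfolding L_def using 3 bdd by (intro cSUP_upper) auto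
      moreover have "x^2 < a^2" using 3 by (intro power_strict_mono) auto
      then have "x^3 - x/2 \<le> 0" using 3 a2
        by (simp add: power3_eq_cube power2_eq_square algebra_simps mult_nonneg_nonneg)
      ultimately have "(x^3 - x/2)*L \<le> (x^3 - x/2)*E x" by (intro mult_left_mono_neg)
      then show ?thesis using G[OF xS] by (simp add: E_def)
    next
      case 4
      have xS: "x \<in> S" "-x \<in> S" using 4 a0 by (auto simp: S_def)
      have "L \<le> E x" unfolding L_def using 4 ne by (intro cSUP_least) (auto intro!: Emono)
      moreover have "a^2 < x^2" using 4 a0 by (intro power_strict_mono) auto
      then have "x^3 - x/2 \<ge> 0" using 4 a2 a0
        by (simp add: power3_eq_cube power2_eq_square algebra_simps)
      ultimately have "(x^3 - x/2)*L \<le> (x^3 - x/2)*E x" by (intro mult_left_mono)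
      then show ?thesis using G[OF xS] by (simp add: E_def)
    qed
  qed
  have Dbd: "D (-1) \<le> D z \<and> D z \<le> D 1" if "z \<in> S" for z
    using mono[of "-1" z] mono[of z 1] that a1 a0 by (auto simp: S_def)
  have m1S: "-1 \<in> S" "1 \<in> S" using a1 a0 by (auto simp: S_def)
  have piece: "f integrable_on {c..d}"
    if cd: "-1 \<le> c" "c < d" "d \<le> 1" "\<forall>x\<in>{c<..<d}. x \<in> S" for c d
  proof -
    define Dc where "Dc x = (if x = c then D (-1) else if x = d then D 1 else D x)" for x
    have m11: "D (-1) \<le> D 1" using Dbd m1S by blast
    have "mono_on {c..d} Dc"
    proof (rule mono_onI)
      fix r s assume rs: "r \<in> {c..d}" "s \<in> {c..d}" "r \<le> s"
      show "Dc r \<le> Dc s"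
      proof (cases "r = c \<or> s = d")
        case True
        then show ?thesis unfolding Dc_def using Dbd cd rs m11
          by (auto simp: not_le)
      next
        case False
        then have "r \<in> {c<..<d}" "s \<in> {c<..<d}" using rs by auto
        then show ?thesis unfolding Dc_def using False mono rs cd by auto
      qed
    qed
    moreover have "continuous_on {c..d} (\<lambda>x::real. x^3 - x/2)" by (intro continuous_intros) auto
    moreover have "\<forall>x\<in>{c..d}. \<bar>x^3 - x/2\<bar> \<le> 1"
    proof
      fix x assume "x \<in> {c..d}"
      then have x1: "\<bar>x\<bar> \<le> 1" using cd by auto
      have "x^2 \<le> 1" using x1 by (simp add: abs_square_le_1)
      then have "\<bar>x^2 - 1/2\<bar> \<le> 1" unfolding abs_le_iff using zero_le_power2[of x] by linarith
      have "x^3 - x/2 = x * (x^2 - 1/2)" by (simp add: power3_eq_cube power2_eq_square algebra_simps)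
      then show "\<bar>x^3 - x/2\<bar> \<le> 1"
        using x1 \<open>\<bar>x^2 - 1/2\<bar> \<le> 1\<close> by (simp add: abs_mult mult_le_one)
    qed
    ultimately have i1: "(\<lambda>x. (x^3 - x/2) * Dc x) integrable_on {c..d}" by (rule int_prod)
    have i2: "(\<lambda>x. f (-a) + (x+a)*B + (x+a)*x*C) integrable_on {c..d}"
      by (intro integrable_continuous_interval continuous_intros)
    have "(\<lambda>x. f (-a) + (x+a)*B + (x+a)*x*C + (x^3 - x/2) * Dc x) integrable_on {c..d}"
      using Henstock_Kurzweil_Integration.integrable_add[OF i2 i1] by simp
    then show ?thesis
    proof (rule integrable_spike_finite[where S="{c,d}", rotated 2])
      fix x assume "x \<in> {c..d} - {c,d}"
      then have "x \<in> {c<..<d}" by auto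
      then show "f x = f (-a) + (x+a)*B + (x+a)*x*C + (x^3 - x/2) * Dc x"
        using newt cd unfolding Dc_def by auto
    qed simp
  qed
  have fi1: "f integrable_on {-1..-a}" using a0 a1 by (intro piece) (auto simp: S_def)
  have fi2: "f integrable_on {-a..0}" using a0 a1 by (intro piece) (auto simp: S_def)
  have fi3: "f integrable_on {0..a}" using a0 a1 by (intro piece) (auto simp: S_def)
  have fi4: "f integrable_on {a..1}" using a0 a1 by (intro piece) (auto simp: S_def)
  have fin: "f integrable_on {-1..0}" by (rule Henstock_Kurzweil_Integration.integrable_combine[OF _ _ fi1 fi2]) (use a0 a1 in auto)
  have fip: "f integrable_on {0..1}" by (rule Henstock_Kurzweil_Integration.integrable_combine[OF _ _ fi3 fi4]) (use a0 a1 in auto)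
  have fi: "f integrable_on {-1..1}" by (rule Henstock_Kurzweil_Integration.integrable_combine[OF _ _ fin fip]) auto
  have refl: "integral {0..1} (\<lambda>x. f (-x)) = integral {-1..0} f"
    using Henstock_Kurzweil_Integration.integral_reflect_real[of 0 "-1" f] by simp
  have firefl: "(\<lambda>x. f (-x)) integrable_on {0..1}"
    using Henstock_Kurzweil_Integration.integrable_reflect_real[where a="-1" and b=0 and f=f] fin by simp
  have "integral {-1..1} f = integral {-1..0} f + integral {0..1} f"
    using Henstock_Kurzweil_Integration.integral_combine[OF _ _ fi, of 0] by simp
  also have "\<dots> = integral {0..1} (\<lambda>x. f x + f (-x))"
    using Henstock_Kurzweil_Integration.integral_add[OF fip firefl] refl by simp
  finally have Ieq: "integral {-1..1} f = integral {0..1} (\<lambda>x. f x + f (-x))" .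
  define F where "F x = 2*f 0*x + 2*C*x^3/3 + L*(x^4/4 - x^2/4)" for x
  have hp: "((\<lambda>x. 2*f 0 + 2*x^2*C + (x^3 - x/2)*L) has_integral (F 1 - F 0)) {0..1}"
  proof (rule fundamental_theorem_of_calculus)
    fix x :: real assume "x \<in> {0..1}"
    have "(F has_real_derivative (2*f 0 + 2*x^2*C + (x^3 - x/2)*L)) (at x within {0..1})"
      unfolding F_def by (auto intro!: derivative_eq_intros simp: algebra_simps power2_eq_square power3_eq_cube)
    then show "(F has_vector_derivative (2*f 0 + 2*x^2*C + (x^3 - x/2)*L)) (at x within {0..1})"
      by (simp add: has_real_derivative_iff_has_vector_derivative)
  qed simp
  have "F 1 - F 0 = 2/3 * (f (-a) + f 0 + f a)" unfolding F_def Cv by (simp add: field_simps)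
  then have "2/3 * (f (-a) + f 0 + f a) = integral {0..1} (\<lambda>x. 2*f 0 + 2*x^2*C + (x^3 - x/2)*L)"
    using hp by (simp add: integral_unique)
  also have "\<dots> \<le> integral {0..1} (\<lambda>x. f x + f (-x))"
    using hp Henstock_Kurzweil_Integration.integrable_add[OF fip firefl] pw by (intro Henstock_Kurzweil_Integration.integral_le) auto
  finally have ineq2: "2/3 * (f (-a) + f 0 + f a) \<le> integral {-1..1} f" using Ieq by simp
  have e: "- sqrt 3 / 3 = - b" "sqrt 3 / 3 = b" "- sqrt 2 / 2 = - a" "sqrt 2 / 2 = a"
    by (simp_all add: a_def b_def)
  show ?thesis unfolding e using ineq1 ineq2 by simp
qed

end
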